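(* Let $S\subseteq\{0,1\}^n$, $1\le m\le n$, $f\in[0,1/2]$, and $h\in_R\mathcal{H}^f_{m\times n}$. Then $$|S|\le\min\left\{z\ \middle|\ \frac{1}{1+2^{2m}v(z)/z^2}>\Pr[S(h)\ge1]\right\},$$ where $z$ ranges over integers $1\le z\le 2^n$ and the minimum of the empty set is $+\infty$.
   Context: $h\in_R\mathcal{H}^f_{m\times n}$ means $h(x)=Ax+b\bmod 2$ with $A\in\{0,1\}^{m\times n}$ having i.i.d. entries with $\Pr[A_{ij}=1]=f$ and $b\in\{0,1\}^m$ uniform and independent of $A$; $S(h)=|\{x\in S:h(x)=0\}|$. For integer $1\le q\le 2^n+1$: $w^*(n,q)=\max\{w\ge0:\sum_{j=1}^w\binom{n}{j}\le q-1\}$, $r(n,q)=q-1-\sum_{w=1}^{w^*(n,q)}\binom{n}{w}$, $$(q-1)\,\epsilon(n,m,q,f)=\sum_{w=1}^{w^*(n,q)}\binom{n}{w}\frac{(1+(1-2f)^w)^m}{2^m}+\frac{r(n,q)}{2^m}(1+(1-2f)^{w^*(n,q)+1})^m,$$ and $v(q)=\frac{q}{2^m}\left(1+\epsilon(n,m,q,f)(q-1)-\frac{q}{2^m}\right)$. *)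

theory Defs
  imports "HOL-Probability.Probability"
begin

text \<open>Bit vectors in {0,1}^n are functions nat => bool vanishing outside {..<n}
 (True = 1). A matrix A in {0,1}^(m x n) is a function on index pairs (i,j),
 i<m, j<n; b in {0,1}^m is a function on {..<m}.\<close>

definition bitvecs :: "nat \<Rightarrow> (nat \<Rightarrow> bool) set" where
  "bitvecs n = {x. \<forall>i. n \<le> i \<longrightarrow> \<not> x i}"

text \<open>Coordinate i of h(x) = Ax + b mod 2 (True = 1).\<close>
definition hval :: "nat \<Rightarrow> (nat \<times> nat \<Rightarrow> bool) \<Rightarrow> (nat \<Rightarrow> bool) \<Rightarrow> (nat \<Rightarrow> bool) \<Rightarrow> nat \<Rightarrow> bool" where
  "hval n A b x i = (odd (card {j. j < n \<and> A (i, j) \<and> x j}) \<noteq> b i)"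

definition hcount :: "nat \<Rightarrow> nat \<Rightarrow> (nat \<Rightarrow> bool) set \<Rightarrow> (nat \<times> nat \<Rightarrow> bool) \<Rightarrow> (nat \<Rightarrow> bool) \<Rightarrow> nat" where
  "hcount m n S A b = card {x \<in> S. \<forall>i<m. \<not> hval n A b x i}"

text \<open>The distribution of (A,b) for h in_R H^f_{m x n}: entries of A i.i.d.
 Bernoulli(f), b uniform and independent of A.\<close>
definition hash_dist :: "nat \<Rightarrow> nat \<Rightarrow> real \<Rightarrow> ((nat \<times> nat \<Rightarrow> bool) \<times> (nat \<Rightarrow> bool)) pmf" where
  "hash_dist m n f = pair_pmf (Pi_pmf ({..<m} \<times> {..<n}) False (\<lambda>_. bernoulli_pmf f))
                              (Pi_pmf {..<m} False (\<lambda>_. bernoulli_pmf (1/2)))"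

definition wstar :: "nat \<Rightarrow> nat \<Rightarrow> nat" where
  "wstar n q = Max {w. w \<le> n \<and> (\<Sum>j=1..w. n choose j) \<le> q - 1}"

definition rr :: "nat \<Rightarrow> nat \<Rightarrow> nat" where
  "rr n q = q - 1 - (\<Sum>w=1..wstar n q. n choose w)"

definition eps :: "nat \<Rightarrow> nat \<Rightarrow> nat \<Rightarrow> real \<Rightarrow> real" where
  "eps n m q f =
     ((\<Sum>w=1..wstar n q. real (n choose w) * (1 + (1 - 2*f)^w)^m / 2^m)
      + real (rr n q) / 2^m * (1 + (1 - 2*f)^(wstar n q + 1))^m) / (real q - 1)"

definition vv :: "nat \<Rightarrow> nat \<Rightarrow> real \<Rightarrow> nat \<Rightarrow> real" where
  "vv n m f q = real q / 2^m * (1 + eps n m q f * (real q - 1) - real q / 2^m)"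

end

theory Submission
  imports Defs
begin

lemma prob_bind_pmf:
  "measure_pmf.prob (bind_pmf M N) X = measure_pmf.expectation M (\<lambda>x. measure_pmf.prob (N x) X)"
proof -
  have int: "integrable (measure_pmf M) (\<lambda>x. measure_pmf.prob (N x) X)"
    by (rule measure_pmf.integrable_const_bound[where B=1]) auto
  have "ennreal (measure_pmf.prob (bind_pmf M N) X) = emeasure (bind_pmf M N) X"
    by (simp add: measure_pmf.emeasure_eq_measure)
  also have "\<dots> = (\<integral>\<^sup>+x. emeasure (N x) X \<partial>M)" by simp
  also have "\<dots> = (\<integral>\<^sup>+x. ennreal (measure_pmf.prob (N x) X) \<partial>M)"
    by (simp add: measure_pmf.emeasure_eq_measure)
  also have "\<dots> = ennreal (measure_pmf.expectation M (\<lambda>x. measure_pmf.prob (N x) X))"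
    by (rule nn_integral_eq_integral[OF int]) auto
  finally show ?thesis
    by (subst (asm) ennreal_inj) (auto intro: Bochner_Integration.integral_nonneg)
qed

lemma row_parity:
  fixes D :: "nat set" and f :: real
  assumes "finite D" "0 \<le> f" "f \<le> 1"
  shows "measure_pmf.prob (Pi_pmf D False (\<lambda>_. bernoulli_pmf f)) {r. even (card {j\<in>D. r j})}
         = (1 + (1-2*f)^card D)/2"
  using assms(1)
proof (induction D rule: finite_induct)
  case empty
  then show ?case by simp
next
  case (insert x D)
  let ?P = "Pi_pmf D False (\<lambda>_. bernoulli_pmf f)"
  let ?E = "{r. even (card {j\<in>insert x D. r j})}"
  let ?p = "measure_pmf.prob ?P {r. even (card {j\<in>D. r j})}"
  have split: "\<And>r y. {j\<in>insert x D. (r(x:=y)) j} = (if y then insert x {j\<in>D. r j} else {j\<in>D. r j})"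
    using insert.hyps by auto
  have c: "\<And>r y. card {j\<in>insert x D. (r(x:=y)) j} = (if y then Suc (card {j\<in>D. r j}) else card {j\<in>D. r j})"
    unfolding split using insert.hyps by (auto simp: card_insert_if)
  have compl: "measure_pmf.prob ?P {r. odd (card {j\<in>D. r j})} = 1 - ?p"
  proof -
    have "{r. odd (card {j\<in>D. r j})} = UNIV - {r. even (card {j\<in>D. r j})}" by auto
    then show ?thesis using measure_pmf.prob_compl[of "{r. even (card {j\<in>D. r j})}" ?P] by simp
  qed
  have e1: "(\<lambda>r. r(x:=True)) -` ?E = {r. odd (card {j\<in>D. r j})}"
  proof (rule set_eqI)
    fix r show "r \<in> (\<lambda>r. r(x:=True)) -` ?E \<longleftrightarrow> r \<in> {r. odd (card {j\<in>D. r j})}"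
      using c[of r True] by simp
  qed
  have e2: "(\<lambda>r. r(x:=False)) -` ?E = {r. even (card {j\<in>D. r j})}"
  proof (rule set_eqI)
    fix r show "r \<in> (\<lambda>r. r(x:=False)) -` ?E \<longleftrightarrow> r \<in> {r. even (card {j\<in>D. r j})}"
      using c[of r False] by simp
  qed
  have "measure_pmf.prob (Pi_pmf (insert x D) False (\<lambda>_. bernoulli_pmf f)) ?E
      = measure_pmf.expectation (bernoulli_pmf f)
          (\<lambda>y. measure_pmf.prob (map_pmf (\<lambda>r. r(x:=y)) ?P) ?E)"
    using insert.hyps
    by (simp add: Pi_pmf_insert' map_pmf_def prob_bind_pmf del: measure_map_pmf)
  also have "\<dots> = f * measure_pmf.prob ?P {r. odd (card {j\<in>D. r j})} + (1-f) * ?p"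
    using assms by (simp only: integral_bernoulli_pmf measure_map_pmf e1 e2) simp
  also have "\<dots> = (1 + (1-2*f)^card (insert x D))/2"
    using insert.hyps insert.IH by (simp add: compl algebra_simps)
  finally show ?case .
qed

lemma row_parity':
  fixes D J :: "nat set" and f :: real
  assumes "finite J" "D \<subseteq> J" "0 \<le> f" "f \<le> 1"
  shows "measure_pmf.prob (Pi_pmf J False (\<lambda>_. bernoulli_pmf f)) {r. even (card {j\<in>D. r j})}
         = (1 + (1-2*f)^card D)/2"
proof -
  have fD: "finite D" using assms finite_subset by blast
  have "Pi_pmf D False (\<lambda>_. bernoulli_pmf f) = map_pmf (\<lambda>r x. if x \<in> D then r x else False) (Pi_pmf J False (\<lambda>_. bernoulli_pmf f))"
    using assms by (intro Pi_pmf_subset) auto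
  moreover have "(\<lambda>r x. if x \<in> D then r x else False) -` {r. even (card {j\<in>D. r j})} = {r. even (card {j\<in>D. r j})}"
  proof -
    have eq: "\<And>r. {j\<in>D. (if j \<in> D then r j else False)} = {j\<in>D. r j}" by auto
    show ?thesis by (simp only: vimage_def mem_Collect_eq eq)
  qed
  ultimately show ?thesis using row_parity[OF fD assms(3,4)] by simp
qed

lemma Pi_pmf_rows:
  assumes fI: "finite I" and fJ: "finite J"
  shows "Pi_pmf (I\<times>J) d (\<lambda>_. p) = map_pmf (\<lambda>F (i,j). F i j) (Pi_pmf I (\<lambda>_. d) (\<lambda>_. Pi_pmf J d (\<lambda>_. p)))"
proof (rule pmf_eqI)
  fix G :: "'a \<times> 'b \<Rightarrow> 'c"
  let ?M = "Pi_pmf I (\<lambda>_. d) (\<lambda>_. Pi_pmf J d (\<lambda>_. p))"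
  let ?g = "\<lambda>F (i,j). F i j"
  have supp: "\<And>F. F \<in> set_pmf ?M \<Longrightarrow> (\<forall>i. i \<notin> I \<longrightarrow> F i = (\<lambda>_. d)) \<and> (\<forall>i j. j \<notin> J \<longrightarrow> F i j = d)"
  proof -
    fix F assume F: "F \<in> set_pmf ?M"
    have 1: "\<forall>i. i \<notin> I \<longrightarrow> F i = (\<lambda>_. d)" using F set_Pi_pmf_subset[OF fI, of "\<lambda>_. d"] by blast
    have "\<forall>i j. j \<notin> J \<longrightarrow> F i j = d"
    proof (intro allI impI)
      fix i j assume j: "j \<notin> J"
      show "F i j = d"
      proof (cases "i \<in> I")
        case True
        then have "F i \<in> set_pmf (Pi_pmf J d (\<lambda>_. p))"
          using F fI by (auto simp: set_Pi_pmf PiE_dflt_def)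
        then show ?thesis using set_Pi_pmf_subset[OF fJ, of d] j by blast
      next
        case False then show ?thesis using 1 by simp
      qed
    qed
    with 1 show "?thesis F" by blast
  qed
  show "pmf (Pi_pmf (I\<times>J) d (\<lambda>_. p)) G = pmf (map_pmf ?g ?M) G"
  proof (cases "\<forall>x. x \<notin> I\<times>J \<longrightarrow> G x = d")
    case True
    define F0 where "F0 = (\<lambda>i j. if i \<in> I \<and> j \<in> J then G (i,j) else d)"
    have "?g -` {G} \<inter> set_pmf ?M = {F0} \<inter> set_pmf ?M"
    proof (intro equalityI subsetI)
      fix F assume "F \<in> ?g -` {G} \<inter> set_pmf ?M"
      then have F: "?g F = G" "F \<in> set_pmf ?M" by auto
      have "F = F0"
      proof (intro ext)
        fix i j
        show "F i j = F0 i j"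
          using supp[OF F(2)] fun_cong[OF F(1), of "(i,j)"] by (auto simp: F0_def)
      qed
      then show "F \<in> {F0} \<inter> set_pmf ?M" using F by auto
    next
      fix F assume "F \<in> {F0} \<inter> set_pmf ?M"
      then show "F \<in> ?g -` {G} \<inter> set_pmf ?M" using True by (auto simp: F0_def fun_eq_iff)
    qed
    then have "pmf (map_pmf ?g ?M) G = measure_pmf.prob ?M ({F0} \<inter> set_pmf ?M)"
      by (metis pmf_map measure_Int_set_pmf)
    also have "\<dots> = pmf ?M F0" by (metis measure_Int_set_pmf measure_pmf_single)
    also have "\<dots> = (\<Prod>i\<in>I. \<Prod>j\<in>J. pmf p (G (i,j)))"
      using fI fJ by (simp add: pmf_Pi F0_def)
    also have "\<dots> = (\<Prod>x\<in>I\<times>J. pmf p (G x))"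
      by (simp add: prod.cartesian_product)
    also have "\<dots> = pmf (Pi_pmf (I\<times>J) d (\<lambda>_. p)) G"
      using True fI fJ by (simp add: pmf_Pi)
    finally show ?thesis ..
  next
    case False
    have "?g -` {G} \<inter> set_pmf ?M = {}"
    proof (intro equalityI subsetI)
      fix F assume "F \<in> ?g -` {G} \<inter> set_pmf ?M"
      then have F: "?g F = G" "F \<in> set_pmf ?M" by auto
      then show "F \<in> {}" using supp[OF F(2)] False by auto
    qed auto
    then have "pmf (map_pmf ?g ?M) G = 0"
      by (metis pmf_map measure_Int_set_pmf measure_empty)
    then show ?thesis using False fI fJ by (auto simp: pmf_Pi)
  qed
qed

lemma agree_prob:
  fixes f :: real and D :: "nat set" and n m :: nat
  assumes "0 \<le> f" "f \<le> 1" "D \<subseteq> {..<n}"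
  shows "measure_pmf.prob (Pi_pmf ({..<m}\<times>{..<n}) False (\<lambda>_. bernoulli_pmf f))
           {A. \<forall>i<m. even (card {j\<in>D. A (i,j)})} = ((1+(1-2*f)^card D)/2)^m"
proof -
  let ?R = "Pi_pmf {..<n} False (\<lambda>_. bernoulli_pmf f)"
  have pre: "(\<lambda>F (i,j). F i j) -` {A. \<forall>i<m. even (card {j\<in>D. A (i,j)})}
        = Pi {..<m} (\<lambda>_. {r. even (card {j\<in>D. r j})})"
    by (auto simp: Pi_def)
  then have "measure_pmf.prob (Pi_pmf ({..<m}\<times>{..<n}) False (\<lambda>_. bernoulli_pmf f))
           {A. \<forall>i<m. even (card {j\<in>D. A (i,j)})}
      = measure_pmf.prob (Pi_pmf {..<m} (\<lambda>_. False) (\<lambda>_. ?R)) (Pi {..<m} (\<lambda>_. {r. even (card {j\<in>D. r j})}))"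
  proof -
    have "Pi_pmf ({..<m}\<times>{..<n}) False (\<lambda>_. bernoulli_pmf f) = map_pmf (\<lambda>F (i,j). F i j) (Pi_pmf {..<m} (\<lambda>_. False) (\<lambda>_. ?R))"
      by (intro Pi_pmf_rows finite_lessThan)
    then show ?thesis by (simp only: measure_map_pmf pre)
  qed
  also have "\<dots> = (\<Prod>i<m. measure_pmf.prob ?R {r. even (card {j\<in>D. r j})})"
    by (rule measure_Pi_pmf_Pi) simp
  also have "\<dots> = ((1+(1-2*f)^card D)/2)^m"
  proof -
    have rp: "measure_pmf.prob ?R {r. even (card {j\<in>D. r j})} = (1 + (1-2*f)^card D)/2"
      using assms by (intro row_parity') auto
    show ?thesis by (simp only: rp prod_constant card_lessThan)
  qed
  finally show ?thesis .
qed

lemma parity_agree: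
  assumes "finite U"
  shows "(odd (card {j\<in>U. a j \<and> x j}) = odd (card {j\<in>U. a j \<and> y j}))
         \<longleftrightarrow> even (card {j\<in>U. x j \<noteq> y j \<and> a j})"
  using assms
proof (induction U rule: finite_induct)
  case empty then show ?case by simp
next
  case (insert u U)
  have e: "\<And>P. {j\<in>insert u U. P j} = (if P u then insert u {j\<in>U. P j} else {j\<in>U. P j})"
    by auto
  show ?case using insert by (simp only: e) (auto simp: card_insert_if)
qed

lemma hval_iff: "(\<not> hval n A b x i) \<longleftrightarrow> b i = odd (card {j\<in>{..<n}. A (i,j) \<and> x j})"
  unfolding hval_def by auto

lemma pair_prob:
  fixes f :: real
  assumes f: "0 \<le> f" "f \<le> 1"
  shows "measure_pmf.prob (hash_dist m n f)
           {(A,b). (\<forall>i<m. \<not> hval n A b x i) \<and> (\<forall>i<m. \<not> hval n A b y i)}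
         = (1/2)^m * ((1+(1-2*f)^card {j\<in>{..<n}. x j \<noteq> y j})/2)^m"
proof -
  let ?PA = "Pi_pmf ({..<m}\<times>{..<n}) False (\<lambda>_. bernoulli_pmf f)"
  let ?PB = "Pi_pmf {..<m} False (\<lambda>_. bernoulli_pmf (1/2))"
  let ?E = "{(A,b). (\<forall>i<m. \<not> hval n A b x i) \<and> (\<forall>i<m. \<not> hval n A b y i)}"
  let ?D = "{j\<in>{..<n}. x j \<noteq> y j}"
  let ?ag = "{A. \<forall>i<m. even (card {j\<in>?D. A (i,j)})}"
  let ?par = "\<lambda>A i. odd (card {j\<in>{..<n}. A (i,j) \<and> x j})"
  have inner: "measure_pmf.prob ?PB {b. (A,b) \<in> ?E} = (1/2)^m * indicator ?ag A" for A
  proof (cases "A \<in> ?ag")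
    case True
    have "{b. (A,b) \<in> ?E} = Pi {..<m} (\<lambda>i. {?par A i})"
    proof -
      have "\<forall>i<m. ?par A i = odd (card {j\<in>{..<n}. A (i,j) \<and> y j})"
      proof (intro allI impI)
        fix i assume "i < m"
        then have "even (card {j\<in>?D. A (i,j)})" using True by auto
        moreover have "{j\<in>?D. A (i,j)} = {j\<in>{..<n}. x j \<noteq> y j \<and> A (i,j)}" by auto
        ultimately show "?par A i = odd (card {j\<in>{..<n}. A (i,j) \<and> y j})"
          using parity_agree[of "{..<n}" "\<lambda>j. A (i,j)" x y] by simp
      qed
      then show ?thesis by (auto simp: hval_iff Pi_def)
    qed
    then have "measure_pmf.prob ?PB {b. (A,b) \<in> ?E} = (\<Prod>i<m. measure_pmf.prob (bernoulli_pmf (1/2)) {?par A i})"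
      by (simp add: measure_Pi_pmf_Pi)
    then show ?thesis using True by (simp add: measure_pmf_single)
  next
    case False
    have "{b. (A,b) \<in> ?E} = {}"
    proof -
      obtain i where i: "i < m" "odd (card {j\<in>?D. A (i,j)})" using False by auto
      moreover have "{j\<in>?D. A (i,j)} = {j\<in>{..<n}. x j \<noteq> y j \<and> A (i,j)}" by auto
      ultimately have "?par A i \<noteq> odd (card {j\<in>{..<n}. A (i,j) \<and> y j})"
        using parity_agree[of "{..<n}" "\<lambda>j. A (i,j)" x y] by simp
      then show ?thesis using i(1) by (auto simp: hval_iff)
    qed
    then have "measure_pmf.prob ?PB {b. (A,b) \<in> ?E} = 0" by (simp only: measure_empty)
    then show ?thesis using False by simp
  qed
  have "measure_pmf.prob (hash_dist m n f) ?E
      = measure_pmf.expectation ?PA (\<lambda>A. measure_pmf.prob (map_pmf (Pair A) ?PB) ?E)"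
    unfolding hash_dist_def pair_pmf_def
    by (simp add: prob_bind_pmf map_pmf_def[symmetric] del: measure_map_pmf)
  also have "\<dots> = measure_pmf.expectation ?PA (\<lambda>A. (1/2)^m * indicator ?ag A)"
    using inner by (simp add: vimage_def)
  also have "\<dots> = (1/2)^m * measure_pmf.prob ?PA ?ag"
    by simp
  also have "\<dots> = (1/2)^m * ((1+(1-2*f)^card ?D)/2)^m"
  proof -
    have Dsub: "?D \<subseteq> {..<n}" by auto
    show ?thesis using agree_prob[OF f Dsub, of m] by simp
  qed
  finally show ?thesis .
qed

lemma exp_indicator: "measure_pmf.expectation M (indicator A :: _ \<Rightarrow> real) = measure_pmf.prob M A"
  by simp

lemma second_moment:
  fixes X :: "'a \<Rightarrow> real"
  assumes fin: "finite (set_pmf M)"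
    and ind: "\<And>w. X w * indicator {w. X w \<ge> 1} w = X w"
    and pos: "measure_pmf.expectation M X > 0"
  shows "(measure_pmf.expectation M X)^2 / measure_pmf.expectation M (\<lambda>w. (X w)^2)
         \<le> measure_pmf.prob M {w. X w \<ge> 1}"
proof -
  define mu where "mu = measure_pmf.expectation M X"
  define s where "s = measure_pmf.expectation M (\<lambda>w. (X w)^2)"
  define P where "P = measure_pmf.prob M {w. X w \<ge> 1}"
  have key: "s \<ge> 2*t*mu - t^2 * P" for t
  proof -
    have pw: "2*t*X w - t^2 * indicator {w. X w \<ge> 1} w \<le> (X w)^2" for w
    proof -
      have "0 \<le> (X w - t * indicator {w. X w \<ge> 1} w)^2" by simp
      also have "\<dots> = (X w)^2 - 2*t*(X w * indicator {w. X w \<ge> 1} w) + t^2 * (indicator {w. X w \<ge> 1} w)^2"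
        by (simp add: power2_eq_square algebra_simps)
      also have "(indicator {w. X w \<ge> 1} w :: real)^2 = indicator {w. X w \<ge> 1} w"
        by (simp add: indicator_def)
      finally show ?thesis using ind[of w] by simp
    qed
    have "measure_pmf.expectation M (\<lambda>w. 2*t*X w - t^2 * indicator {w. X w \<ge> 1} w)
          \<le> measure_pmf.expectation M (\<lambda>w. (X w)^2)"
      by (intro integral_mono integrable_measure_pmf_finite fin pw)
    moreover have "measure_pmf.expectation M (\<lambda>w. 2*t*X w - t^2 * indicator {w. X w \<ge> 1} w)
          = 2*t*mu - t^2 * P"
      unfolding mu_def P_def
      by (subst Bochner_Integration.integral_diff) (auto intro!: integrable_measure_pmf_finite fin)
    ultimately show ?thesis unfolding s_def by simp
  qed
  have mupos: "mu > 0" using pos mu_def by simp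
  have Ppos: "P > 0"
  proof (rule ccontr)
    assume "\<not> P > 0"
    then have "P = 0" using measure_nonneg[of M] unfolding P_def by (meson not_less order.antisym)
    then have "s \<ge> 2*((s+1)/(2*mu))*mu" using key[of "(s+1)/(2*mu)"] by simp
    then show False using mupos by (simp add: field_simps)
  qed
  have "s \<ge> 2*(mu/P)*mu - (mu/P)^2 * P" using key[of "mu/P"] .
  also have "2*(mu/P)*mu - (mu/P)^2 * P = mu^2/P" using Ppos by (simp add: field_simps power2_eq_square)
  finally have "mu^2/P \<le> s" .
  then have "mu^2 \<le> s * P" using Ppos by (simp add: field_simps)
  moreover have "s > 0"
  proof -
    have "mu^2 > 0" using mupos by simp
    with \<open>mu^2 \<le> s * P\<close> Ppos show ?thesis by (smt (verit) mult_nonpos_nonneg)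
  qed
  ultimately have "mu^2 / s \<le> P" by (simp add: field_simps)
  then show ?thesis unfolding mu_def s_def P_def .
qed

lemma fin_hash: "finite (set_pmf (hash_dist m n f))"
proof -
  have "finite (set_pmf (Pi_pmf ({..<m}\<times>{..<n}) False (\<lambda>_. bernoulli_pmf f)))"
    by (auto simp: set_Pi_pmf intro!: finite_PiE_dflt)
  moreover have "finite (set_pmf (Pi_pmf {..<m} False (\<lambda>_. bernoulli_pmf (1/2))))"
    by (auto simp: set_Pi_pmf intro!: finite_PiE_dflt)
  ultimately show ?thesis unfolding hash_dist_def by simp
qed

definition Ev :: "nat \<Rightarrow> nat \<Rightarrow> (nat \<Rightarrow> bool) \<Rightarrow> ((nat \<times> nat \<Rightarrow> bool) \<times> (nat \<Rightarrow> bool)) set" where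
  "Ev m n x = {(A,b). \<forall>i<m. \<not> hval n A b x i}"

lemma hcount_sum:
  assumes "finite S"
  shows "real (hcount m n S (fst w) (snd w)) = (\<Sum>x\<in>S. indicator (Ev m n x) w)"
proof -
  have "real (hcount m n S (fst w) (snd w)) = (\<Sum>x\<in>{x\<in>S. \<forall>i<m. \<not> hval n (fst w) (snd w) x i}. 1)"
    unfolding hcount_def by simp
  also have "\<dots> = (\<Sum>x\<in>S. if \<forall>i<m. \<not> hval n (fst w) (snd w) x i then 1 else 0)"
    using assms by (simp add: sum.If_cases Int_def conj_commute)
  also have "\<dots> = (\<Sum>x\<in>S. indicator (Ev m n x) w)"
    by (intro sum.cong) (auto simp: Ev_def indicator_def split: prod.splits)
  finally show ?thesis .
qed

lemma prob_Ev2: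
  fixes f :: real
  assumes "0 \<le> f" "f \<le> 1"
  shows "measure_pmf.prob (hash_dist m n f) (Ev m n x \<inter> Ev m n y)
         = (1/2)^m * ((1+(1-2*f)^card {j\<in>{..<n}. x j \<noteq> y j})/2)^m"
proof -
  have "Ev m n x \<inter> Ev m n y = {(A,b). (\<forall>i<m. \<not> hval n A b x i) \<and> (\<forall>i<m. \<not> hval n A b y i)}"
    by (auto simp: Ev_def)
  then show ?thesis using pair_prob[OF assms, of m n x y] by simp
qed

lemma prob_Ev1:
  fixes f :: real
  assumes "0 \<le> f" "f \<le> 1"
  shows "measure_pmf.prob (hash_dist m n f) (Ev m n x) = (1/2)^m"
  using prob_Ev2[OF assms, of m n x x] by simp

lemma EX:
  fixes f :: real
  assumes "0 \<le> f" "f \<le> 1" "finite S"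
  shows "measure_pmf.expectation (hash_dist m n f) (\<lambda>w. real (hcount m n S (fst w) (snd w)))
         = real (card S) * (1/2)^m"
proof -
  have "measure_pmf.expectation (hash_dist m n f) (\<lambda>w. real (hcount m n S (fst w) (snd w)))
      = measure_pmf.expectation (hash_dist m n f) (\<lambda>w. \<Sum>x\<in>S. indicator (Ev m n x) w)"
    using hcount_sum[OF assms(3)] by simp
  also have "\<dots> = (\<Sum>x\<in>S. measure_pmf.prob (hash_dist m n f) (Ev m n x))"
    by (subst Bochner_Integration.integral_sum) (auto intro: integrable_measure_pmf_finite fin_hash)
  also have "\<dots> = real (card S) * (1/2)^m"
    using prob_Ev1[OF assms(1,2)] by simp
  finally show ?thesis .
qed

lemma EX2:
  fixes f :: real
  assumes "0 \<le> f" "f \<le> 1" "finite S"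
  shows "measure_pmf.expectation (hash_dist m n f) (\<lambda>w. (real (hcount m n S (fst w) (snd w)))^2)
         = (\<Sum>x\<in>S. \<Sum>y\<in>S. (1/2)^m * ((1+(1-2*f)^card {j\<in>{..<n}. x j \<noteq> y j})/2)^m)"
proof -
  have sq: "(real (hcount m n S (fst w) (snd w)))^2 = (\<Sum>x\<in>S. \<Sum>y\<in>S. indicator (Ev m n x \<inter> Ev m n y) w)" for w
    unfolding hcount_sum[OF assms(3)] power2_eq_square sum_product
    by (intro sum.cong refl) (simp add: indicator_def)
  have "measure_pmf.expectation (hash_dist m n f) (\<lambda>w. (real (hcount m n S (fst w) (snd w)))^2)
      = measure_pmf.expectation (hash_dist m n f) (\<lambda>w. \<Sum>x\<in>S. \<Sum>y\<in>S. indicator (Ev m n x \<inter> Ev m n y) w)"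
    by (simp only: sq)
  also have "\<dots> = (\<Sum>x\<in>S. \<Sum>y\<in>S. measure_pmf.prob (hash_dist m n f) (Ev m n x \<inter> Ev m n y))"
    by (subst Bochner_Integration.integral_sum, blast intro: integrable_measure_pmf_finite fin_hash,
        subst Bochner_Integration.integral_sum, auto intro: integrable_measure_pmf_finite fin_hash)
  also have "\<dots> = (\<Sum>x\<in>S. \<Sum>y\<in>S. (1/2)^m * ((1+(1-2*f)^card {j\<in>{..<n}. x j \<noteq> y j})/2)^m)"
    using prob_Ev2[OF assms(1,2)] by simp
  finally show ?thesis .
qed

lemma wstar_prop: "wstar n q \<le> n \<and> (\<Sum>j=1..wstar n q. n choose j) \<le> q - 1"
proof -
  let ?W = "{w. w \<le> n \<and> (\<Sum>j=1..w. n choose j) \<le> q - 1}"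
  have "finite ?W" by (rule finite_subset[of _ "{..n}"]) auto
  moreover have "0 \<in> ?W" by simp
  ultimately have "Max ?W \<in> ?W" by (intro Max_in) auto
  then show ?thesis unfolding wstar_def by simp
qed

definition gg :: "nat \<Rightarrow> real \<Rightarrow> nat \<Rightarrow> real" where
  "gg m f w = ((1 + (1-2*f)^w)/2)^m"

lemma gg_nonneg: "0 \<le> f \<Longrightarrow> f \<le> 1/2 \<Longrightarrow> 0 \<le> gg m f w"
  unfolding gg_def by simp

lemma gg_anti: assumes "0 \<le> f" "f \<le> 1/2" "w1 \<le> w2" shows "gg m f w2 \<le> gg m f w1"
proof -
  have "(1-2*f)^w2 \<le> (1-2*f)^w1" using assms by (intro power_decreasing) auto
  then show ?thesis unfolding gg_def using assms by (intro power_mono) auto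
qed

definition hdist :: "nat \<Rightarrow> (nat \<Rightarrow> bool) \<Rightarrow> (nat \<Rightarrow> bool) \<Rightarrow> nat" where
  "hdist n x y = card {j\<in>{..<n}. x j \<noteq> y j}"

lemma hd_count:
  assumes "T \<subseteq> bitvecs n"
  shows "card {y\<in>T. hdist n x y = w} \<le> n choose w"
proof -
  let ?F = "\<lambda>y. {j\<in>{..<n}. x j \<noteq> y j}"
  have "inj_on ?F {y\<in>T. hdist n x y = w}"
  proof (rule inj_onI)
    fix y z assume y: "y \<in> {y\<in>T. hdist n x y = w}" and z: "z \<in> {y\<in>T. hdist n x y = w}" and e: "?F y = ?F z"
    show "y = z"
    proof
      fix j show "y j = z j"
      proof (cases "j < n")
        case True then show ?thesis using e by (auto simp: set_eq_iff)
      next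
        case False then show ?thesis using y z assms by (auto simp: bitvecs_def)
      qed
    qed
  qed
  moreover have "?F ` {y\<in>T. hdist n x y = w} \<subseteq> {B. B \<subseteq> {..<n} \<and> card B = w}"
    by (auto simp: hdist_def)
  ultimately have "card {y\<in>T. hdist n x y = w} \<le> card {B. B \<subseteq> {..<n} \<and> card B = w}"
    by (intro card_inj_on_le) auto
  also have "\<dots> = n choose w" by (simp add: n_subsets)
  finally show ?thesis .
qed

lemma hd_pos:
  assumes "x \<in> bitvecs n" "y \<in> bitvecs n" "x \<noteq> y"
  shows "1 \<le> hdist n x y"
proof -
  obtain j where j: "x j \<noteq> y j" using assms(3) by auto
  then have "j < n" using assms by (auto simp: bitvecs_def)
  then have "{j\<in>{..<n}. x j \<noteq> y j} \<noteq> {}" using j by auto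
  then show ?thesis unfolding hdist_def by (simp add: Suc_le_eq card_gt_0_iff)
qed

lemma per_x:
  fixes f :: real
  assumes T: "T \<subseteq> bitvecs n" and x: "x \<in> bitvecs n" "x \<notin> T" and fT: "finite T"
    and cT: "card T = q - 1" and f: "0 \<le> f" "f \<le> 1/2"
  shows "(\<Sum>y\<in>T. gg m f (hdist n x y))
     \<le> (\<Sum>w=1..wstar n q. real (n choose w) * gg m f w) + real (rr n q) * gg m f (wstar n q + 1)"
proof -
  define W where "W = wstar n q"
  define G where "G = gg m f (W+1)"
  define d where "d = (\<lambda>y. hdist n x y)"
  define T1 where "T1 = {y\<in>T. d y \<le> W}"
  have sW: "(\<Sum>j=1..W. n choose j) \<le> q - 1" using wstar_prop unfolding W_def by blast
  have dpos: "\<And>y. y \<in> T \<Longrightarrow> 1 \<le> d y" unfolding d_def using hd_pos T x by blast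
  have "(\<Sum>y\<in>T. gg m f (d y)) = (\<Sum>y\<in>T. (gg m f (d y) - G)) + real (card T) * G"
    by (simp add: sum_subtractf)
  also have "(\<Sum>y\<in>T. (gg m f (d y) - G)) = (\<Sum>y\<in>T - T1. (gg m f (d y) - G)) + (\<Sum>y\<in>T1. (gg m f (d y) - G))"
    by (rule sum.subset_diff) (auto simp: T1_def fT)
  also have "(\<Sum>y\<in>T - T1. (gg m f (d y) - G)) \<le> 0"
  proof (rule sum_nonpos)
    fix y assume "y \<in> T - T1"
    then have "W + 1 \<le> d y" by (auto simp: T1_def)
    then show "gg m f (d y) - G \<le> 0" unfolding G_def using gg_anti[OF f] by (simp add: gg_anti[OF f])
  qed
  also have "(\<Sum>y\<in>T1. (gg m f (d y) - G)) = (\<Sum>w=1..W. (\<Sum>y\<in>{y\<in>T1. d y = w}. (gg m f (d y) - G)))"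
  proof (rule sum.group[symmetric])
    show "finite T1" using fT by (simp add: T1_def)
    show "d ` T1 \<subseteq> {1..W}" using dpos by (auto simp: T1_def)
  qed simp
  also have "\<dots> = (\<Sum>w=1..W. real (card {y\<in>T1. d y = w}) * (gg m f w - G))"
    by (intro sum.cong refl) simp
  also have "\<dots> \<le> (\<Sum>w=1..W. real (n choose w) * (gg m f w - G))"
  proof (rule sum_mono)
    fix w assume w: "w \<in> {1..W}"
    have "card {y\<in>T1. d y = w} \<le> n choose w"
      using hd_count[of T1 n x w] T unfolding d_def T1_def by auto
    moreover have "0 \<le> gg m f w - G" unfolding G_def using gg_anti[OF f, of w "W+1"] w by simp
    ultimately show "real (card {y\<in>T1. d y = w}) * (gg m f w - G) \<le> real (n choose w) * (gg m f w - G)"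
      by (intro mult_right_mono) auto
  qed
  finally have "(\<Sum>y\<in>T. gg m f (d y)) \<le> (\<Sum>w=1..W. real (n choose w) * (gg m f w - G)) + real (card T) * G"
    by simp
  also have "\<dots> = (\<Sum>w=1..W. real (n choose w) * gg m f w) + (real (q-1) - real (\<Sum>j=1..W. n choose j)) * G"
    by (simp add: algebra_simps sum_subtractf sum_distrib_right sum_distrib_left cT)
  also have "real (q-1) - real (\<Sum>j=1..W. n choose j) = real (rr n q)"
    unfolding rr_def W_def[symmetric] by (rule of_nat_diff[OF sW, symmetric])
  finally show ?thesis unfolding d_def W_def G_def .
qed

lemma eps_eq:
  assumes "2 \<le> q"
  shows "eps n m q f * (real q - 1) =
     (\<Sum>w=1..wstar n q. real (n choose w) * gg m f w) + real (rr n q) * gg m f (wstar n q + 1)"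
proof -
  have nz: "real q - 1 \<noteq> 0" using assms by simp
  have s: "(\<Sum>w=1..wstar n q. real (n choose w) * (1 + (1 - 2*f)^w)^m / 2^m) = (\<Sum>w=1..wstar n q. real (n choose w) * gg m f w)"
    by (intro sum.cong refl) (simp add: gg_def power_divide)
  have r: "real (rr n q) / 2^m * (1 + (1 - 2*f)^(wstar n q + 1))^m = real (rr n q) * gg m f (wstar n q + 1)"
    by (simp only: gg_def power_divide) simp
  show ?thesis unfolding eps_def using nz by (simp only: s r) simp
qed

lemma inner_bound:
  fixes f :: real
  assumes S: "S \<subseteq> bitvecs n" "finite S" "card S = q" "1 \<le> q" and x: "x \<in> S"
    and f: "0 \<le> f" "f \<le> 1/2"
  shows "(\<Sum>y\<in>S - {x}. gg m f (hdist n x y)) \<le> eps n m q f * (real q - 1)"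
proof (cases "q = 1")
  case True
  then have "S - {x} = {}" using S x by (metis card_1_singletonE singletonD subsetI subset_antisym Diff_cancel)
  then show ?thesis using True by (simp only: sum.empty) simp
next
  case False
  have "(\<Sum>y\<in>S - {x}. gg m f (hdist n x y))
     \<le> (\<Sum>w=1..wstar n q. real (n choose w) * gg m f w) + real (rr n q) * gg m f (wstar n q + 1)"
    using S x f by (intro per_x) auto
  also have "\<dots> = eps n m q f * (real q - 1)" using False S by (intro eps_eq[symmetric]) auto
  finally show ?thesis .
qed

lemma prob_lower:
  fixes f :: real
  assumes S: "S \<subseteq> bitvecs n" "finite S" "card S = z" "1 \<le> z"
    and f: "0 \<le> f" "f \<le> 1/2"
  shows "1 / (1 + 2^(2*m) * vv n m f z / (real z)^2)
         \<le> measure_pmf.prob (hash_dist m n f) {(A, b). hcount m n S A b \<ge> 1}"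
proof -
  let ?M = "hash_dist m n f"
  define X where "X = (\<lambda>w. real (hcount m n S (fst w) (snd w)))"
  define mu where "mu = real z * (1/2)^m"
  define e where "e = eps n m z f * (real z - 1)"
  have f1: "f \<le> 1" using f by simp
  have EXv: "measure_pmf.expectation ?M X = mu"
    unfolding X_def mu_def using EX[OF f(1) f1 S(2)] S by simp
  have mupos: "mu > 0" unfolding mu_def using S by simp
  have ev: "{w. X w \<ge> 1} = {(A, b). hcount m n S A b \<ge> 1}"
    unfolding X_def by auto
  have sm: "mu^2 / measure_pmf.expectation ?M (\<lambda>w. (X w)^2) \<le> measure_pmf.prob ?M {(A, b). hcount m n S A b \<ge> 1}"
  proof -
    have ind: "X w * indicator {w. X w \<ge> 1} w = X w" for w
      unfolding X_def by (auto simp: indicator_def)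
    have "(measure_pmf.expectation ?M X)^2 / measure_pmf.expectation ?M (\<lambda>w. (X w)^2) \<le> measure_pmf.prob ?M {w. X w \<ge> 1}"
      by (rule second_moment[OF fin_hash ind]) (simp add: EXv mupos)
    then show ?thesis by (simp only: EXv ev)
  qed
  define E2 where "E2 = measure_pmf.expectation ?M (\<lambda>w. (X w)^2)"
  have E2eq: "E2 = (\<Sum>x\<in>S. \<Sum>y\<in>S. (1/2)^m * gg m f (hdist n x y))"
    unfolding E2_def X_def using EX2[OF f(1) f1 S(2), of m n] by (simp add: gg_def hdist_def)
  have E2le: "E2 \<le> mu * (1 + e)"
  proof -
    have "E2 = (\<Sum>x\<in>S. (1/2)^m * (1 + (\<Sum>y\<in>S - {x}. gg m f (hdist n x y))))"
      unfolding E2eq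
    proof (intro sum.cong refl)
      fix x assume x: "x \<in> S"
      have "(\<Sum>y\<in>S. (1/2)^m * gg m f (hdist n x y)) = (1/2)^m * gg m f (hdist n x x) + (\<Sum>y\<in>S - {x}. (1/2)^m * gg m f (hdist n x y))"
        using x S(2) by (simp add: sum.remove)
      also have "gg m f (hdist n x x) = 1" by (simp add: gg_def hdist_def)
      finally show "(\<Sum>y\<in>S. (1/2)^m * gg m f (hdist n x y)) = (1/2)^m * (1 + (\<Sum>y\<in>S - {x}. gg m f (hdist n x y)))"
        by (simp add: sum_distrib_left algebra_simps)
    qed
    also have "\<dots> \<le> (\<Sum>x\<in>S. (1/2)^m * (1 + e))"
      unfolding e_def using inner_bound[OF S(1-2) S(3) S(4) _ f] by (intro sum_mono mult_left_mono) auto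
    also have "\<dots> = mu * (1 + e)" unfolding mu_def using S by simp
    finally show ?thesis .
  qed
  have E2pos: "E2 > 0"
  proof -
    have "(\<Sum>x\<in>S. \<Sum>y\<in>S. (1/2)^m * gg m f (hdist n x y)) \<ge> (\<Sum>x\<in>S. (1/2::real)^m)"
    proof (rule sum_mono)
      fix x assume x: "x \<in> S"
      have "(1/2::real)^m = (1/2)^m * gg m f (hdist n x x)" by (simp add: gg_def hdist_def)
      also have "\<dots> \<le> (\<Sum>y\<in>S. (1/2)^m * gg m f (hdist n x y))"
        using x S(2) gg_nonneg[OF f] by (intro member_le_sum) auto
      finally show "(1/2::real)^m \<le> (\<Sum>y\<in>S. (1/2)^m * gg m f (hdist n x y))" .
    qed
    moreover have "(\<Sum>x\<in>S. (1/2::real)^m) > 0" using S by simp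
    ultimately show ?thesis unfolding E2eq by linarith
  qed
  have ep: "1 + e > 0"
  proof -
    have "0 < mu * (1 + e)" using E2pos E2le by linarith
    then show ?thesis using mupos by (simp add: zero_less_mult_iff)
  qed
  have "1 + 2^(2*m) * vv n m f z / (real z)^2 = 2^m * (1 + e) / real z"
  proof -
    have t: "(2::real)^(2*m) = (2^m)^2" by (simp add: power_mult mult.commute)
    have "(2::real)^m > 0" by simp
    then show ?thesis unfolding vv_def e_def[symmetric] t using S(4)
      by (simp add: field_simps power2_eq_square)
  qed
  then have "1 / (1 + 2^(2*m) * vv n m f z / (real z)^2) = real z / (2^m * (1 + e))"
    by simp
  also have "\<dots> = mu^2 / (mu * (1 + e))"
  proof -
    have "mu^2 / (mu * (1 + e)) = mu / (1 + e)" using mupos by (simp add: power2_eq_square)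
    also have "\<dots> = real z / (2^m * (1 + e))" unfolding mu_def by (simp add: power_divide)
    finally show ?thesis by simp
  qed
  finally have "1 / (1 + 2^(2*m) * vv n m f z / (real z)^2) = mu^2 / (mu * (1 + e))" .
  also have "\<dots> \<le> mu^2 / E2"
    using E2le E2pos mupos by (intro divide_left_mono) (auto intro: mult_pos_pos)
  also have "\<dots> \<le> measure_pmf.prob ?M {(A, b). hcount m n S A b \<ge> 1}" using sm unfolding E2_def .
  finally show ?thesis .
qed

lemma finite_bitvecs: "finite (bitvecs n)"
proof -
  have "bitvecs n \<subseteq> (\<lambda>B i. i \<in> B) ` Pow {..<n}"
  proof
    fix x assume "x \<in> bitvecs n"
    then have "x = (\<lambda>i. i \<in> {i. i < n \<and> x i})" by (auto simp: bitvecs_def fun_eq_iff) (meson not_le)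
    then show "x \<in> (\<lambda>B i. i \<in> B) ` Pow {..<n}" by blast
  qed
  then show ?thesis by (rule finite_subset) auto
qed

theorem lemma3:
  fixes S :: "(nat \<Rightarrow> bool) set" and m n :: nat and f :: real
  assumes "S \<subseteq> bitvecs n" and "1 \<le> m" and "m \<le> n"
    and "0 \<le> f" and "f \<le> 1/2"
  shows "enat (card S) \<le>
    (INF z \<in> {z::nat. 1 \<le> z \<and> z \<le> 2^n \<and>
        1 / (1 + 2^(2*m) * vv n m f z / (real z)^2)
          > measure_pmf.prob (hash_dist m n f) {(A, b). hcount m n S A b \<ge> 1}}. enat z)"
proof (rule INF_greatest)
  fix z assume z: "z \<in> {z::nat. 1 \<le> z \<and> z \<le> 2^n \<and>
        1 / (1 + 2^(2*m) * vv n m f z / (real z)^2)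
          > measure_pmf.prob (hash_dist m n f) {(A, b). hcount m n S A b \<ge> 1}}"
  have fS: "finite S" using assms(1) finite_bitvecs finite_subset by blast
  show "enat (card S) \<le> enat z"
  proof (rule ccontr)
    assume "\<not> enat (card S) \<le> enat z"
    then have "z \<le> card S" by simp
    then obtain S' where S': "S' \<subseteq> S" "card S' = z" "finite S'"
      by (metis obtain_subset_with_card_n)
    have "1 / (1 + 2^(2*m) * vv n m f z / (real z)^2)
         \<le> measure_pmf.prob (hash_dist m n f) {(A, b). hcount m n S' A b \<ge> 1}"
      using S' assms z by (intro prob_lower) auto
    also have "\<dots> \<le> measure_pmf.prob (hash_dist m n f) {(A, b). hcount m n S A b \<ge> 1}"
    proof (rule measure_pmf.finite_measure_mono)
      show "{(A, b). hcount m n S' A b \<ge> 1} \<subseteq> {(A, b). hcount m n S A b \<ge> 1}"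
      proof (clarsimp)
        fix A b assume "Suc 0 \<le> hcount m n S' A b"
        moreover have "hcount m n S' A b \<le> hcount m n S A b"
          unfolding hcount_def using S' fS by (intro card_mono) auto
        ultimately show "Suc 0 \<le> hcount m n S A b" by simp
      qed
    qed simp
    finally show False using z by simp
  qed
qed

end
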